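(* Let $H$ be a Hilbert space and $U_{ik}\in B(H)$, $i,k=1,\dots,n$, operators satisfying relations (R1)–(R5). Then for all $i,j,k,l$ with $i\neq j$ and $k\neq l$, $$U_{ik}^*U_{jl}=\omega_{ij}\omega_{lk}U_{jl}U_{ik}^*.$$
   Context: $n\ge2$, $\theta\in M_n(\mathbb R)$ skew-symmetric, $\omega_{ij}=e^{2\pi i\theta_{ij}}$. Relations, for all $i,j,k,l\in\{1,\dots,n\}$: (R1) $U_{ik}U_{jl}+\omega_{ji}U_{jk}U_{il}=\omega_{kl}U_{il}U_{jk}+\omega_{ji}\omega_{kl}U_{jl}U_{ik}$; (R2) $\sum_iU_{ik}U_{il}^*=\delta_{kl}1$; (R3) $\sum_iU_{il}^*U_{ik}=\delta_{kl}1$; (R4) $U_{jk}U_{ik}^*=0$ for $i\neq j$; (R5) $U_{ik}^*U_{jk}=0$ for $i\neq j$. *)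

theory Defs
  imports "HOL-Analysis.Analysis"
begin

text \<open>Completeness comes from
  the class banach.\<close>
definition complex_hilbert :: "(complex \<Rightarrow> 'h::banach \<Rightarrow> 'h) \<Rightarrow> ('h \<Rightarrow> 'h \<Rightarrow> complex) \<Rightarrow> bool" where
  "complex_hilbert sc ip \<longleftrightarrow>
     (\<forall>r x. sc (complex_of_real r) x = r *\<^sub>R x) \<and>
     (\<forall>a b x. sc (a * b) x = sc a (sc b x)) \<and>
     (\<forall>a x y. sc a (x + y) = sc a x + sc a y) \<and>
     (\<forall>a b x. sc (a + b) x = sc a x + sc b x) \<and>
     (\<forall>x y z. ip x (y + z) = ip x y + ip x z) \<and>
     (\<forall>a x y. ip x (sc a y) = a * ip x y) \<and>
     (\<forall>x y. ip y x = cnj (ip x y)) \<and>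
     (\<forall>x. ip x x = complex_of_real ((norm x)\<^sup>2))"

definition bounded_op :: "(complex \<Rightarrow> 'h::banach \<Rightarrow> 'h) \<Rightarrow> ('h \<Rightarrow> 'h) \<Rightarrow> bool" where
  "bounded_op sc T \<longleftrightarrow> bounded_linear T \<and> (\<forall>a x. T (sc a x) = sc a (T x))"

text \<open>The Hilbert space adjoint T* (unique in a Hilbert space).\<close>
definition adj :: "('h \<Rightarrow> 'h \<Rightarrow> complex) \<Rightarrow> ('h \<Rightarrow> 'h) \<Rightarrow> ('h \<Rightarrow> 'h)" where
  "adj ip T = (THE S. \<forall>x y. ip (T x) y = ip x (S y))"

definition omega :: "(nat \<Rightarrow> nat \<Rightarrow> real) \<Rightarrow> nat \<Rightarrow> nat \<Rightarrow> complex" where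
  "omega \<theta> i j = cis (2 * pi * \<theta> i j)"

end

theory Submission
  imports Defs
begin


locale chil =
  fixes sc :: "complex \<Rightarrow> 'h::banach \<Rightarrow> 'h" and ip :: "'h \<Rightarrow> 'h \<Rightarrow> complex"
  assumes H: "complex_hilbert sc ip"
begin

lemma sc_real: "sc (complex_of_real r) x = r *\<^sub>R x" using H unfolding complex_hilbert_def by blast
lemma sc_mult: "sc (a * b) x = sc a (sc b x)" using H unfolding complex_hilbert_def by blast
lemma sc_add: "sc a (x + y) = sc a x + sc a y" using H unfolding complex_hilbert_def by blast
lemma sc_add2: "sc (a + b) x = sc a x + sc b x" using H unfolding complex_hilbert_def by blast
lemma ip_add_r: "ip x (y + z) = ip x y + ip x z" using H unfolding complex_hilbert_def by blast
lemma ip_sc_r: "ip x (sc a y) = a * ip x y" using H unfolding complex_hilbert_def by blast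
lemma ip_cnj: "ip y x = cnj (ip x y)" using H unfolding complex_hilbert_def by blast
lemma ip_norm: "ip x x = complex_of_real ((norm x)\<^sup>2)" using H unfolding complex_hilbert_def by blast

lemma sc_one: "sc 1 x = x" using sc_real[of 1 x] by simp
lemma sc_zero: "sc a 0 = 0" using sc_add[of a 0 0] by simp
lemma sc_minus: "sc a (- x) = - sc a x" by (metis add.right_inverse minus_unique sc_add sc_zero)
lemma sc_diff: "sc a (x - y) = sc a x - sc a y" using sc_add[of a x "-y"] sc_minus by simp

lemma ip_add_l: "ip (x + y) z = ip x z + ip y z"
  by (simp add: ip_cnj[of "x+y" z] ip_cnj[of x z] ip_cnj[of y z] ip_add_r)
lemma ip_diff_r: "ip x (y - z) = ip x y - ip x z"
  using ip_add_r[of x z "y - z"] by simp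
lemma ip_diff_l: "ip (x - y) z = ip x z - ip y z"
  using ip_add_l[of y "x - y" z] by simp
lemma ip_zero_r: "ip x 0 = 0" using ip_diff_r[of x 0 0] by simp
lemma ip_zero_l: "ip 0 x = 0" using ip_diff_l[of 0 0 x] by simp
lemma ip_scaleR_r: "ip x (r *\<^sub>R y) = complex_of_real r * ip x y"
  using ip_sc_r[of x "complex_of_real r" y] by (simp add: sc_real)
lemma ip_scaleR_l: "ip (r *\<^sub>R x) y = complex_of_real r * ip x y"
  by (simp add: ip_cnj[of "r *\<^sub>R x" y] ip_scaleR_r ip_cnj[of x y])
lemma Re_sym: "Re (ip x y) = Re (ip y x)" by (simp add: ip_cnj[of y x])
lemma norm_sq: "(norm x)\<^sup>2 = Re (ip x x)" by (simp add: ip_norm)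
lemma norm_add_sq: "(norm (x + y))\<^sup>2 = (norm x)\<^sup>2 + (norm y)\<^sup>2 + 2 * Re (ip x y)"
  unfolding norm_sq by (simp add: ip_add_l ip_add_r Re_sym[of y x])
lemma norm_diff_sq: "(norm (x - y))\<^sup>2 = (norm x)\<^sup>2 + (norm y)\<^sup>2 - 2 * Re (ip x y)"
  unfolding norm_sq by (simp add: ip_diff_l ip_diff_r Re_sym[of y x])

lemma CS: "Re (ip x y) \<le> norm x * norm y"
proof (cases "y = 0")
  case True then show ?thesis by (simp add: ip_zero_r)
next
  case False
  define t where "t = Re (ip x y) / (norm y)\<^sup>2"
  have ny: "norm y > 0" using False by simp
  have "0 \<le> (norm (x - t *\<^sub>R y))\<^sup>2" by simp
  also have "\<dots> = (norm x)\<^sup>2 + t\<^sup>2 * (norm y)\<^sup>2 - 2 * t * Re (ip x y)"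
    by (simp add: norm_diff_sq ip_scaleR_r power_mult_distrib)
  also have "\<dots> = (norm x)\<^sup>2 - (Re (ip x y))\<^sup>2 / (norm y)\<^sup>2"
    using ny by (simp add: t_def field_simps power2_eq_square)
  finally have "(Re (ip x y))\<^sup>2 \<le> (norm x * norm y)\<^sup>2"
    using ny by (simp add: field_simps power_mult_distrib)
  then show ?thesis
    by (rule power2_le_imp_le) simp
qed

lemma ext_ip: assumes "\<And>z. ip z a = ip z b" shows "a = b"
proof -
  have "ip (a - b) (a - b) = 0" by (simp add: ip_diff_r assms)
  then show ?thesis by (simp add: ip_norm)
qed

end


context chil begin

lemma riesz_real:
  fixes f :: "'h \<Rightarrow> real" assumes bl: "bounded_linear f"
  shows "\<exists>u. \<forall>x. f x = Re (ip u x)"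
proof (cases "\<forall>x. f x = 0")
  case True then show ?thesis by (intro exI[of _ 0]) (simp add: ip_zero_l)
next
  case False
  interpret f: bounded_linear f by (rule bl)
  obtain K where K: "\<And>x. norm (f x) \<le> norm x * K" using f.bounded by blast
  define B where "B = f ` {x. norm x \<le> 1}"
  define M where "M = Sup B"
  have Bne: "B \<noteq> {}" unfolding B_def by (auto intro!: exI[of _ 0])
  have Bbdd: "bdd_above B" unfolding B_def bdd_above_def
  proof (intro exI ballI)
    fix y assume "y \<in> f ` {x. norm x \<le> 1}"
    then obtain x where x: "norm x \<le> 1" "y = f x" by auto
    have "y \<le> norm x * K" using K[of x] x by auto
    also have "\<dots> \<le> max K 0"
    proof (cases "K \<ge> 0")
      case True then show ?thesis using x mult_right_mono[OF x(1) True] by simp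
    next
      case False then show ?thesis by (simp add: mult_nonneg_nonpos)
    qed
    finally show "y \<le> max K 0" .
  qed
  have le: "f y \<le> M * norm y" for y
  proof (cases "y = 0")
    case True then show ?thesis by simp
  next
    case False
    define z where "z = (1 / norm y) *\<^sub>R y"
    have "norm z = 1" using False by (simp add: z_def)
    then have "f z \<in> B" unfolding B_def by auto
    then have "f z \<le> M" unfolding M_def using Bbdd by (rule cSup_upper)
    moreover have "f z = f y / norm y" by (simp add: z_def f.scale)
    ultimately show ?thesis using False by (simp add: field_simps)
  qed
  have Mpos: "M > 0"
  proof -
    obtain x where x: "f x \<noteq> 0" using False by auto
    have "\<exists>y. f y > 0"
    proof (cases "f x > 0")
      case True then show ?thesis by blast
    next
      case False then have "f (- x) > 0" using x by (simp add: f.neg)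
      then show ?thesis by blast
    qed
    then obtain y where y: "f y > 0" by blast
    have "M * norm y > 0" using le[of y] y by linarith
    then show ?thesis by (simp add: zero_less_mult_iff)
  qed
  define e where "e n = inverse (real (Suc n))" for n
  have epos: "e n > 0" for n by (simp add: e_def)
  have "\<exists>x. norm x \<le> 1 \<and> M - e n < f x" for n
  proof -
    have "M - e n < Sup B" using epos[of n] by (simp add: M_def)
    then obtain y where "y \<in> B" "M - e n < y" using less_cSupE Bne by blast
    then show ?thesis unfolding B_def by auto
  qed
  then obtain X where X1: "\<And>n. norm (X n) \<le> 1" and X2: "\<And>n. M - e n < f (X n)" by metis
  have dst: "(norm (X m - X n))\<^sup>2 \<le> 4 * ((e m + e n) / M)" for m n
  proof -
    define s where "s = norm (X m + X n)"
    define d where "d = (e m + e n) / M"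
    have dpos: "d > 0" using epos[of m] epos[of n] Mpos by (simp add: d_def)
    have "2 * M - e m - e n < f (X m + X n)" using X2[of m] X2[of n] by (simp add: f.add)
    also have "\<dots> \<le> M * s" unfolding s_def by (rule le)
    finally have "2 * M - (e m + e n) < M * s" by simp
    moreover have "M * (2 - d) = 2 * M - (e m + e n)" using Mpos by (simp add: d_def field_simps)
    ultimately have "M * (2 - d) < M * s" by simp
    then have s2: "2 - d < s" using Mpos by simp
    have par: "(norm (X m - X n))\<^sup>2 = 2 * (norm (X m))\<^sup>2 + 2 * (norm (X n))\<^sup>2 - s\<^sup>2"
      unfolding s_def by (simp add: norm_add_sq norm_diff_sq)
    have a: "(norm (X m))\<^sup>2 \<le> 1" using X1[of m] by (simp add: power_le_one)
    have b: "(norm (X n))\<^sup>2 \<le> 1" using X1[of n] by (simp add: power_le_one)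
    have "(norm (X m - X n))\<^sup>2 \<le> 4 - s\<^sup>2" using par a b by linarith
    also have "\<dots> \<le> 4 * d"
    proof (cases "d \<le> 2")
      case True
      then have "(2 - d)\<^sup>2 \<le> s\<^sup>2" using s2 by (intro power_mono) auto
      moreover have "(2 - d)\<^sup>2 = 4 - 4 * d + d * d" by (simp add: power2_eq_square algebra_simps)
      moreover have "0 \<le> d * d" by simp
      ultimately show ?thesis by linarith
    next
      case False
      have "0 \<le> s\<^sup>2" by simp
      then show ?thesis using False by linarith
    qed
    finally show ?thesis by (simp add: d_def)
  qed
  have "Cauchy X"
  proof (rule CauchyI)
    fix r :: real assume r: "r > 0"
    obtain N where N: "8 / (M * r\<^sup>2) < real N" using reals_Archimedean2 by blast
    have NN: "8 / (M * real (Suc N)) < r\<^sup>2"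
    proof -
      have "8 / (M * r\<^sup>2) < real (Suc N)" using N by simp
      then have "8 < real (Suc N) * (M * r\<^sup>2)" using Mpos r by (simp add: field_simps)
      then have "8 < r\<^sup>2 * (M * real (Suc N))" by (simp only: mult_ac)
      moreover have "0 < M * real (Suc N)" using Mpos by simp
      ultimately show ?thesis by (simp add: pos_divide_less_eq)
    qed
    show "\<exists>N. \<forall>m\<ge>N. \<forall>n\<ge>N. norm (X m - X n) < r"
    proof (intro exI allI impI)
      fix m n assume mn: "N \<le> m" "N \<le> n"
      have em: "e m \<le> inverse (real (Suc N))" using mn unfolding e_def
        by (intro le_imp_inverse_le) auto
      have en: "e n \<le> inverse (real (Suc N))" using mn unfolding e_def
        by (intro le_imp_inverse_le) auto
      have "4 * ((e m + e n) / M) \<le> 4 * ((2 * inverse (real (Suc N))) / M)"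
        using em en Mpos by (intro mult_left_mono divide_right_mono) auto
      also have "\<dots> = 8 / (M * real (Suc N))" by (simp add: field_simps)
      finally have "(norm (X m - X n))\<^sup>2 < r\<^sup>2" using dst[of m n] NN by linarith
      then show "norm (X m - X n) < r" using r by (simp add: power_less_imp_less_base)
    qed
  qed
  then obtain u where u: "X \<longlonglongrightarrow> u" using Cauchy_convergent_iff convergent_def by blast
  have nu: "norm u \<le> 1"
    by (rule LIMSEQ_le_const2[OF tendsto_norm[OF u]]) (use X1 in auto)
  have fX: "(\<lambda>n. f (X n)) \<longlonglongrightarrow> f u" using f.tendsto[OF u] .
  have e0: "e \<longlonglongrightarrow> 0" unfolding e_def by (rule LIMSEQ_inverse_real_of_nat)
  have "M \<le> f u"
  proof (rule LIMSEQ_le_const)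
    show "(\<lambda>n. f (X n) + e n) \<longlonglongrightarrow> f u" using tendsto_add[OF fX e0] by simp
    show "\<exists>N. \<forall>n\<ge>N. M \<le> f (X n) + e n" using X2 by (auto intro: less_imp_le simp: algebra_simps)
  qed
  moreover have "f u \<le> M" using le[of u] nu Mpos
    by (metis mult_left_le mult.commute less_imp_le order_trans)
  ultimately have fu: "f u = M" by simp
  have nu1: "norm u = 1"
  proof -
    have "M * 1 \<le> M * norm u" using le[of u] fu by simp
    then have "1 \<le> norm u" using Mpos by simp
    then show ?thesis using nu by simp
  qed
  have key: "f v \<le> M * Re (ip u v)" for v
  proof (rule ccontr)
    assume neg: "\<not> f v \<le> M * Re (ip u v)"
    define b where "b = f v"
    define c where "c = Re (ip u v)"
    define w where "w = (norm v)\<^sup>2"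
    define \<delta> where "\<delta> = b - M * c"
    have dpos: "\<delta> > 0" using neg by (simp add: \<delta>_def b_def c_def)
    have wpos: "w \<ge> 0" by (simp add: w_def)
    define t where "t = min (M / (\<bar>b\<bar> + 1)) (\<delta> / (M * w + 1))"
    have Mw: "M * w + 1 > 0" using mult_nonneg_nonneg[of M w] Mpos wpos by linarith
    have tpos: "t > 0" using Mpos dpos Mw by (simp add: t_def)
    have t1: "t * \<bar>b\<bar> \<le> M"
    proof -
      have "t \<le> M / (\<bar>b\<bar> + 1)" by (simp add: t_def)
      then have "t * \<bar>b\<bar> \<le> M / (\<bar>b\<bar> + 1) * \<bar>b\<bar>" by (rule mult_right_mono) simp
      also have "\<dots> \<le> M" using Mpos by (simp add: field_simps)
      finally show ?thesis .
    qed
    have t2: "t * (M * w) \<le> \<delta>"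
    proof -
      have "t \<le> \<delta> / (M * w + 1)" by (simp add: t_def)
      then have "t * (M * w) \<le> \<delta> / (M * w + 1) * (M * w)"
        using Mpos wpos by (intro mult_right_mono) auto
      also have "\<dots> \<le> \<delta>" using Mw dpos by (simp add: field_simps)
      finally show ?thesis .
    qed
    have "t * (- b) \<le> t * \<bar>b\<bar>" using tpos by (intro mult_left_mono) auto
    then have nn: "0 \<le> M + t * b" using t1 by simp
    have "M + t * b = f (u + t *\<^sub>R v)" by (simp add: f.add f.scale fu b_def)
    also have "\<dots> \<le> M * norm (u + t *\<^sub>R v)" by (rule le)
    finally have "(M + t * b)\<^sup>2 \<le> (M * norm (u + t *\<^sub>R v))\<^sup>2"
      using nn by (intro power_mono) auto
    also have "\<dots> = M\<^sup>2 * (1 + t\<^sup>2 * w + 2 * t * c)"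
      by (simp add: power_mult_distrib norm_add_sq nu1 ip_scaleR_r w_def c_def)
    finally have ineq: "2 * t * M * b + t\<^sup>2 * b\<^sup>2 \<le> M\<^sup>2 * t\<^sup>2 * w + 2 * t * M\<^sup>2 * c"
      by (simp add: power2_eq_square algebra_simps)
    have "2 * t * M * \<delta> \<le> M\<^sup>2 * t\<^sup>2 * w"
    proof -
      have "t\<^sup>2 * b\<^sup>2 \<ge> 0" by simp
      moreover have "2 * t * M * \<delta> = 2 * t * M * b - 2 * t * M\<^sup>2 * c"
        by (simp add: \<delta>_def power2_eq_square algebra_simps)
      ultimately show ?thesis using ineq by linarith
    qed
    then have "(t * M) * (2 * \<delta>) \<le> (t * M) * (t * (M * w))"
      by (simp add: power2_eq_square algebra_simps)
    then have "2 * \<delta> \<le> t * (M * w)" using tpos Mpos by simp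
    then show False using t2 dpos by linarith
  qed
  have "f v = Re (ip (M *\<^sub>R u) v)" for v
  proof -
    have "f (- v) \<le> M * Re (ip u (- v))" by (rule key)
    moreover have "ip u (- v) = - ip u v" using ip_diff_r[of u 0 v] by (simp add: ip_zero_r)
    ultimately have "f v \<ge> M * Re (ip u v)" by (simp add: f.neg)
    then show ?thesis using key[of v] by (simp add: ip_scaleR_l)
  qed
  then show ?thesis by blast
qed

end


context chil begin

lemma CS_abs: "\<bar>Re (ip x y)\<bar> \<le> norm x * norm y"
proof -
  have "ip x (- y) = - ip x y" using ip_diff_r[of x 0 y] by (simp add: ip_zero_r)
  then have "- Re (ip x y) \<le> norm x * norm y" using CS[of x "- y"] by simp
  then show ?thesis using CS[of x y] by linarith
qed

lemma adj_exists1: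
  assumes T: "bounded_op sc T"
  shows "\<exists>u. \<forall>x. ip (T x) y = ip x u"
proof -
  interpret T: bounded_linear T using T by (simp add: bounded_op_def)
  have Tsc: "\<And>a x. T (sc a x) = sc a (T x)" using T by (simp add: bounded_op_def)
  obtain K where K: "\<And>x. norm (T x) \<le> norm x * K" using T.bounded by blast
  define f where "f x = Re (ip y (T x))" for x
  have "bounded_linear f"
  proof (rule bounded_linear_intro)
    show "f (x + z) = f x + f z" for x z by (simp add: f_def T.add ip_add_r)
    show "f (r *\<^sub>R x) = r *\<^sub>R f x" for r x by (simp add: f_def T.scale ip_scaleR_r)
    show "norm (f x) \<le> norm x * (norm y * K)" for x
    proof -
      have "norm (f x) \<le> norm y * norm (T x)" using CS_abs[of y "T x"] by (simp add: f_def)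
      also have "\<dots> \<le> norm y * (norm x * K)" using K[of x] by (intro mult_left_mono) auto
      finally show ?thesis by (simp add: mult_ac)
    qed
  qed
  then obtain u where u: "\<And>x. f x = Re (ip u x)" using riesz_real by blast
  have "ip y (T x) = ip u x" for x
  proof (rule complex_eqI)
    show "Re (ip y (T x)) = Re (ip u x)" using u[of x] by (simp add: f_def)
    have "Re (ip y (T (sc \<i> x))) = Re (ip u (sc \<i> x))" using u[of "sc \<i> x"] by (simp add: f_def)
    then show "Im (ip y (T x)) = Im (ip u x)" by (simp add: Tsc ip_sc_r)
  qed
  then have "ip (T x) y = ip x u" for x
    by (simp add: ip_cnj[of "T x" y] ip_cnj[of x u])
  then show ?thesis by blast
qed

lemma adj_prop:
  assumes T: "bounded_op sc T"
  shows "ip (T x) y = ip x (adj ip T y)"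
proof -
  have "\<forall>y. \<exists>u. \<forall>x. ip (T x) y = ip x u" using adj_exists1[OF T] by blast
  then obtain S where S: "\<And>x y. ip (T x) y = ip x (S y)" by metis
  have "adj ip T = S" unfolding adj_def
  proof (rule the_equality)
    show "\<forall>x y. ip (T x) y = ip x (S y)" using S by blast
    fix S' assume S': "\<forall>x y. ip (T x) y = ip x (S' y)"
    show "S' = S"
    proof
      fix y show "S' y = S y" by (rule ext_ip) (metis S S')
    qed
  qed
  then show ?thesis using S by simp
qed

lemma adj_add: "bounded_op sc T \<Longrightarrow> adj ip T (y + z) = adj ip T y + adj ip T z"
  by (rule ext_ip) (simp add: adj_prop[symmetric] ip_add_r)

lemma adj_sc: "bounded_op sc T \<Longrightarrow> adj ip T (sc a y) = sc a (adj ip T y)"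
  by (rule ext_ip) (simp add: adj_prop[symmetric] ip_sc_r)

lemma adj_zero: "bounded_op sc T \<Longrightarrow> adj ip T 0 = 0"
  using adj_add[of T 0 0] by simp

lemma adj_sum: "bounded_op sc T \<Longrightarrow> adj ip T (\<Sum>m\<in>S. g m) = (\<Sum>m\<in>S. adj ip T (g m))"
  by (induction S rule: infinite_finite_induct) (auto simp: adj_zero adj_add)

lemma adj_diff: "bounded_op sc T \<Longrightarrow> adj ip T (y - z) = adj ip T y - adj ip T z"
  using adj_add[of T z "y - z"] by simp

end



lemma add_fun_sum:
  fixes g :: "'a::ab_group_add \<Rightarrow> 'b::ab_group_add"
  assumes "\<And>a b. g (a + b) = g a + g b"
  shows "g (\<Sum>m\<in>S. f m) = (\<Sum>m\<in>S. g (f m))"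
proof -
  have g0: "g 0 = 0" using assms[of 0 0] by simp
  show ?thesis by (induction S rule: infinite_finite_induct) (auto simp: g0 assms)
qed

lemma two_eq: "(z::'a::real_vector) + z = w + w \<Longrightarrow> z = w"
  by (metis scaleR_2 scaleR_cancel_left zero_neq_numeral)

theorem proposition3p17:
  fixes sc :: "complex \<Rightarrow> 'h::banach \<Rightarrow> 'h" and ip :: "'h \<Rightarrow> 'h \<Rightarrow> complex"
    and n :: nat and \<theta> :: "nat \<Rightarrow> nat \<Rightarrow> real" and U :: "nat \<Rightarrow> nat \<Rightarrow> 'h \<Rightarrow> 'h"
  assumes H: "complex_hilbert sc ip"
    and n: "n \<ge> 2"
    and skew: "\<forall>i\<in>{1..n}. \<forall>j\<in>{1..n}. \<theta> j i = - \<theta> i j"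
    and bdd: "\<forall>i\<in>{1..n}. \<forall>k\<in>{1..n}. bounded_op sc (U i k)"
    and R1: "\<forall>i\<in>{1..n}. \<forall>j\<in>{1..n}. \<forall>k\<in>{1..n}. \<forall>l\<in>{1..n}. \<forall>x.
               U i k (U j l x) + sc (omega \<theta> j i) (U j k (U i l x))
             = sc (omega \<theta> k l) (U i l (U j k x))
               + sc (omega \<theta> j i * omega \<theta> k l) (U j l (U i k x))"
    and R2: "\<forall>k\<in>{1..n}. \<forall>l\<in>{1..n}. \<forall>x.
               (\<Sum>i=1..n. U i k (adj ip (U i l) x)) = (if k = l then x else 0)"
    and R3: "\<forall>k\<in>{1..n}. \<forall>l\<in>{1..n}. \<forall>x.
               (\<Sum>i=1..n. adj ip (U i l) (U i k x)) = (if k = l then x else 0)"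
    and R4: "\<forall>i\<in>{1..n}. \<forall>j\<in>{1..n}. \<forall>k\<in>{1..n}. i \<noteq> j \<longrightarrow>
               (\<forall>x. U j k (adj ip (U i k) x) = 0)"
    and R5: "\<forall>i\<in>{1..n}. \<forall>j\<in>{1..n}. \<forall>k\<in>{1..n}. i \<noteq> j \<longrightarrow>
               (\<forall>x. adj ip (U i k) (U j k x) = 0)"
  shows "\<forall>i\<in>{1..n}. \<forall>j\<in>{1..n}. \<forall>k\<in>{1..n}. \<forall>l\<in>{1..n}. i \<noteq> j \<longrightarrow> k \<noteq> l \<longrightarrow>
           (\<forall>x. adj ip (U i k) (U j l x)
                = sc (omega \<theta> i j * omega \<theta> l k) (U j l (adj ip (U i k) x)))"
proof (intro ballI impI allI)
  interpret chil sc ip by unfold_locales (rule H)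
  fix i j k l x
  assume i: "i \<in> {1..n}" and j: "j \<in> {1..n}" and k: "k \<in> {1..n}" and l: "l \<in> {1..n}"
    and ij: "i \<noteq> j" and kl: "k \<noteq> l"
  define N where "N = {1..n}"
  note mem = i[folded N_def] j[folded N_def] k[folded N_def] l[folded N_def]
  define w where "w = omega \<theta>"
  define Ad where "Ad a b = adj ip (U a b)" for a b
  have bo: "bounded_op sc (U a b)" if "a \<in> N" "b \<in> N" for a b
    by (rule bdd[rule_format, OF that[unfolded N_def]])
  have Uadd: "U a b (y + z) = U a b y + U a b z" if "a \<in> N" "b \<in> N" for a b y z
    using bo[OF that] unfolding bounded_op_def by (metis bounded_linear.linear linear_add)
  have Usc: "U a b (sc c y) = sc c (U a b y)" if "a \<in> N" "b \<in> N" for a b c y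
    using bo[OF that] unfolding bounded_op_def by blast
  have U0: "U a b 0 = 0" if "a \<in> N" "b \<in> N" for a b
    using bo[OF that] unfolding bounded_op_def by (metis bounded_linear.linear linear_0)
  have Aadd: "Ad a b (y + z) = Ad a b y + Ad a b z" if "a \<in> N" "b \<in> N" for a b y z
    unfolding Ad_def by (rule adj_add[OF bo[OF that]])
  have Asc: "Ad a b (sc c y) = sc c (Ad a b y)" if "a \<in> N" "b \<in> N" for a b c y
    unfolding Ad_def by (rule adj_sc[OF bo[OF that]])
  have A0: "Ad a b 0 = 0" if "a \<in> N" "b \<in> N" for a b
    unfolding Ad_def by (rule adj_zero[OF bo[OF that]])
  have R1': "U a p (U b q y) + sc (w b a) (U b p (U a q y))
             = sc (w p q) (U a q (U b p y)) + sc (w b a * w p q) (U b q (U a p y))"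
    if "a \<in> N" "b \<in> N" "p \<in> N" "q \<in> N" for a b p q y
    unfolding w_def by (rule R1[rule_format, OF that[unfolded N_def]])
  have R2': "(\<Sum>m\<in>N. U m p (Ad m p y)) = y" if "p \<in> N" for p y
    using R2[rule_format, OF that[unfolded N_def] that[unfolded N_def], of y] unfolding N_def Ad_def by simp
  have R3': "(\<Sum>m\<in>N. Ad m p (U m p y)) = y" if "p \<in> N" for p y
    using R3[rule_format, OF that[unfolded N_def] that[unfolded N_def], of y] unfolding N_def Ad_def by simp
  have R4': "U b p (Ad a p y) = 0" if "a \<in> N" "b \<in> N" "p \<in> N" "a \<noteq> b" for a b p y
    unfolding Ad_def by (rule R4[rule_format, OF that[unfolded N_def]])
  have R5': "Ad a p (U b p y) = 0" if "a \<in> N" "b \<in> N" "p \<in> N" "a \<noteq> b" for a b p y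
    unfolding Ad_def by (rule R5[rule_format, OF that[unfolded N_def]])
  have w1: "w a a = 1" if "a \<in> N" for a
  proof -
    have "\<theta> a a = - \<theta> a a" using skew[rule_format, OF that[unfolded N_def] that[unfolded N_def]] .
    then have "\<theta> a a = 0" by simp
    then show ?thesis by (simp add: w_def omega_def)
  qed
  have RC: "U a p (U a q y) = sc (w p q) (U a q (U a p y))" if "a \<in> N" "p \<in> N" "q \<in> N" for a p q y
  proof -
    have "U a p (U a q y) + sc (w a a) (U a p (U a q y))
             = sc (w p q) (U a q (U a p y)) + sc (w a a * w p q) (U a q (U a p y))"
      by (rule R1'[OF that(1) that(1) that(2) that(3)])
    then have "U a p (U a q y) + U a p (U a q y) = sc (w p q) (U a q (U a p y)) + sc (w p q) (U a q (U a p y))"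
      using w1[OF that(1)] by (simp add: sc_one)
    then show ?thesis by (rule two_eq)
  qed
  have finN: "finite N" by (simp add: N_def)
  define c where "c = w i j * w l k"
  define y where "y = Ad i k x"
  have termL: "Ad i k (U j l (U m k (Ad m k x))) = (if m = i then sc c (Ad i k (U i k (U j l y))) else 0)"
    if m: "m \<in> N" for m
  proof (cases "m = i")
    case True
    have z: "U j k y = 0" unfolding y_def by (rule R4'[OF mem(1) mem(2) mem(3) ij])
    have "U j l (U i k y) + sc (w i j) (U i l (U j k y))
             = sc (w l k) (U j k (U i l y)) + sc (w i j * w l k) (U i k (U j l y))"
      by (rule R1'[OF mem(2) mem(1) mem(4) mem(3)])
    then have e: "U j l (U i k y) = sc (w l k) (U j k (U i l y)) + sc c (U i k (U j l y))"
      by (simp add: z U0 mem sc_zero c_def)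
    show ?thesis using True
      by (simp add: y_def[symmetric] e Aadd Asc mem R5'[OF mem(1) mem(2) mem(3) ij] sc_zero)
  next
    case False
    show ?thesis
    proof (cases "m = j")
      case True
      have "U j l (U j k (Ad m k x)) = sc (w l k) (U j k (U j l (Ad m k x)))"
        by (rule RC[OF mem(2) mem(4) mem(3)])
      then show ?thesis using True False
        by (simp add: Asc mem R5'[OF mem(1) mem(2) mem(3) ij] sc_zero)
    next
      case mj: False
      have z: "U j k (Ad m k x) = 0" by (rule R4'[OF m mem(2) mem(3) mj])
      have "U j l (U m k (Ad m k x)) + sc (w m j) (U m l (U j k (Ad m k x)))
             = sc (w l k) (U j k (U m l (Ad m k x))) + sc (w m j * w l k) (U m k (U j l (Ad m k x)))"
        by (rule R1'[OF mem(2) m mem(4) mem(3)])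
      then have e: "U j l (U m k (Ad m k x)) = sc (w l k) (U j k (U m l (Ad m k x)))
                   + sc (w m j * w l k) (U m k (U j l (Ad m k x)))"
        by (simp add: z U0 m mem sc_zero)
      have im: "i \<noteq> m" using False by simp
      show ?thesis using False
        by (simp add: e Aadd Asc mem R5'[OF mem(1) mem(2) mem(3) ij] R5'[OF mem(1) m mem(3) im] sc_zero)
    qed
  qed
  have LHS: "Ad i k (U j l x) = sc c (Ad i k (U i k (U j l y)))"
  proof -
    have "Ad i k (U j l x) = Ad i k (U j l (\<Sum>m\<in>N. U m k (Ad m k x)))" using R2'[OF mem(3)] by simp
    also have "\<dots> = (\<Sum>m\<in>N. Ad i k (U j l (U m k (Ad m k x))))"
      by (simp add: add_fun_sum[where g = "U j l"] add_fun_sum[where g = "Ad i k"] Uadd Aadd mem)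
    also have "\<dots> = (\<Sum>m\<in>N. if m = i then sc c (Ad i k (U i k (U j l y))) else 0)"
      by (rule sum.cong) (simp_all add: termL)
    also have "\<dots> = sc c (Ad i k (U i k (U j l y)))" using finN mem(1) by simp
    finally show ?thesis .
  qed
  have termR: "Ad m k (U m k (U j l y)) = (if m = i then Ad i k (U i k (U j l y)) else 0)"
    if m: "m \<in> N" for m
  proof (cases "m = i")
    case True then show ?thesis by simp
  next
    case False
    have im: "i \<noteq> m" using False by simp
    have zj: "U j k y = 0" unfolding y_def by (rule R4'[OF mem(1) mem(2) mem(3) ij])
    show ?thesis
    proof (cases "m = j")
      case True
      have "U j k (U j l y) = sc (w k l) (U j l (U j k y))" by (rule RC[OF mem(2) mem(3) mem(4)])
      then show ?thesis using True False by (simp add: zj U0 mem sc_zero A0)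
    next
      case mj: False
      have zm: "U m k y = 0" unfolding y_def by (rule R4'[OF mem(1) m mem(3) im])
      have "U m k (U j l y) + sc (w j m) (U j k (U m l y))
             = sc (w k l) (U m l (U j k y)) + sc (w j m * w k l) (U j l (U m k y))"
        by (rule R1'[OF m mem(2) mem(3) mem(4)])
      then have e: "U m k (U j l y) + sc (w j m) (U j k (U m l y)) = 0"
        by (simp add: zj zm U0 m mem sc_zero)
      have "Ad m k (U m k (U j l y)) + sc (w j m) (Ad m k (U j k (U m l y))) = 0"
        using arg_cong[OF e, of "Ad m k"] by (simp add: Aadd Asc A0 m mem)
      then show ?thesis using False by (simp add: R5'[OF m mem(2) mem(3) mj] sc_zero)
    qed
  qed
  have RHS: "U j l y = Ad i k (U i k (U j l y))"
  proof -
    have "U j l y = (\<Sum>m\<in>N. Ad m k (U m k (U j l y)))" using R3'[OF mem(3)] by simp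
    also have "\<dots> = (\<Sum>m\<in>N. if m = i then Ad i k (U i k (U j l y)) else 0)"
      by (rule sum.cong) (simp_all add: termR)
    also have "\<dots> = Ad i k (U i k (U j l y))" using finN mem(1) by simp
    finally show ?thesis .
  qed
  show "adj ip (U i k) (U j l x) = sc (omega \<theta> i j * omega \<theta> l k) (U j l (adj ip (U i k) x))"
    using LHS RHS by (simp add: Ad_def y_def c_def w_def)
qed


end
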